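(* Let $V$ be a vertex algebra and $M$ a subspace of $V$ with $C_2(V)\subseteq M$ and $\dim_{\mathbb{C}}M/C_2(V)<\infty$. Then $M$ is an $MZ_{0,-1}$-subspace of $V$ if and only if $r(M/C_2(V))$ is an ideal of the commutative associative algebra $V/C_2(V)$.
   Context: A vertex algebra $(V,Y,\mathbf{1})$ is over $\mathbb{C}$; for $u\in V$ write $Y(u,z)=\sum_{n\in\mathbb{Z}}u_nz^{-n-1}$ with $u_n\in\operatorname{End}V$. Iterated products are nested to the right: $v_{n_1}\cdots v_{n_t}v=v_{n_1}(\cdots(v_{n_t}v))$. $C_2(V)=\operatorname{span}_{\mathbb{C}}\{u_{-2}v: u,v\in V\}$; $V/C_2(V)$ is a commutative associative unital algebra with product $(a+C_2(V))(b+C_2(V))=a_{-1}b+C_2(V)$. For a subspace $M\subseteq V$: $r_{0,-1}(M)$ is the set of $v\in V$ for which there is $m\ge 0$ with $v_{n_1}\cdots v_{n_t}v\in M$ for all $t\ge m$ and all $n_1,\dots,n_t\in\{0,-1\}$. $lsr_{0,-1}(M)$ is the set of $v\in V$ such that for every $b\in V$ there is $m\ge0$ with $b_sv_{n_1}\cdots v_{n_t}v\in M$ for all $t\ge m$ and all $s,n_1,\dots,n_t\in\{0,-1\}$. $rsr_{0,-1}(M)$ is the set of $v\in V$ such that for every $w\in V$ there is $m\ge 0$ with $(v_{n_1}\cdots v_{n_t}v)_nw\in M$ for all $t\ge m$ and all $n,n_1,\dots,n_t\in\{0,-1\}$. $sr_{0,-1}(M)=lsr_{0,-1}(M)\cap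 rsr_{0,-1}(M)$. $M$ is an $MZ_{0,-1}$-subspace of $V$ if $r_{0,-1}(M)=sr_{0,-1}(M)$. For a commutative associative unital algebra $A$ and a subspace $U$: $r(U)=\{a\in A:\exists m\ge1,\ a^t\in U\ \forall t\ge m\}$. *)

theory Defs
  imports Complex_Main
begin

text \<open>A vertex algebra over the complex numbers, presented by its underlying complex
vector space (scalar multiplication sc), the modes md u n v = u_n v (so that
Y(u,z) = sum of u_n z^(-n-1)) and the vacuum vector vac.  The Jacobi identity is
stated in its equivalent component form (Borcherds identity); all occurring sums
are finite by the truncation axiom, expressed by requiring equality of all
sufficiently long partial sums.\<close>

definition borch_lhs ::
  "('v::ab_group_add \<Rightarrow> int \<Rightarrow> 'v \<Rightarrow> 'v) \<Rightarrow> (complex \<Rightarrow> 'v \<Rightarrow> 'v) \<Rightarrow> 'v \<Rightarrow> 'v \<Rightarrow> 'v \<Rightarrow> int \<Rightarrow> int \<Rightarrow> int \<Rightarrow> nat \<Rightarrow> 'v" where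
  "borch_lhs md sc u v w p q r N =
     (\<Sum>i=0..N. sc ((of_int p :: complex) gchoose i) (md (md u (r + int i) v) (p + q - int i) w))"

definition borch_rhs ::
  "('v::ab_group_add \<Rightarrow> int \<Rightarrow> 'v \<Rightarrow> 'v) \<Rightarrow> (complex \<Rightarrow> 'v \<Rightarrow> 'v) \<Rightarrow> 'v \<Rightarrow> 'v \<Rightarrow> 'v \<Rightarrow> int \<Rightarrow> int \<Rightarrow> int \<Rightarrow> nat \<Rightarrow> 'v" where
  "borch_rhs md sc u v w p q r N =
     (\<Sum>i=0..N. sc ((-1) ^ i * ((of_int r :: complex) gchoose i))
        (md u (p + r - int i) (md v (q + int i) w)
         - sc ((-1) powi r) (md v (q + r - int i) (md u (p + int i) w))))"

locale vertex_algebra =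
  vector_space sc for sc :: "complex \<Rightarrow> 'v::ab_group_add \<Rightarrow> 'v" +
  fixes md :: "'v \<Rightarrow> int \<Rightarrow> 'v \<Rightarrow> 'v"
    and vac :: 'v
  assumes md_add_left: "md (u + u') n v = md u n v + md u' n v"
    and md_scale_left: "md (sc c u) n v = sc c (md u n v)"
    and md_add_right: "md u n (v + v') = md u n v + md u n v'"
    and md_scale_right: "md u n (sc c v) = sc c (md u n v)"
    and truncation: "\<exists>N. \<forall>n\<ge>N. md u n v = 0"
    and vacuum: "md vac n v = (if n = -1 then v else 0)"
    and creation: "n \<ge> 0 \<Longrightarrow> md u n vac = 0"
    and creation_id: "md u (-1) vac = u"
    and borcherds: "\<exists>K. \<forall>N\<ge>K. borch_lhs md sc u v w p q r N = borch_rhs md sc u v w p q r N"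

definition C2 :: "(complex \<Rightarrow> 'v::ab_group_add \<Rightarrow> 'v) \<Rightarrow> ('v \<Rightarrow> int \<Rightarrow> 'v \<Rightarrow> 'v) \<Rightarrow> 'v set" where
  "C2 sc md = module.span sc {md u (-2) v | u v. True}"

definition iter :: "('v \<Rightarrow> int \<Rightarrow> 'v \<Rightarrow> 'v) \<Rightarrow> 'v \<Rightarrow> int list \<Rightarrow> 'v" where
  "iter md v ns = foldr (\<lambda>n x. md v n x) ns v"

definition r01 :: "('v \<Rightarrow> int \<Rightarrow> 'v \<Rightarrow> 'v) \<Rightarrow> 'v set \<Rightarrow> 'v set" where
  "r01 md M = {v. \<exists>m::nat. \<forall>ns. length ns \<ge> m \<and> set ns \<subseteq> {0, -1} \<longrightarrow> iter md v ns \<in> M}"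

definition lsr01 :: "('v \<Rightarrow> int \<Rightarrow> 'v \<Rightarrow> 'v) \<Rightarrow> 'v set \<Rightarrow> 'v set" where
  "lsr01 md M = {v. \<forall>b. \<exists>m::nat. \<forall>s ns. s \<in> {0, -1} \<and> length ns \<ge> m \<and> set ns \<subseteq> {0, -1}
      \<longrightarrow> md b s (iter md v ns) \<in> M}"

definition rsr01 :: "('v \<Rightarrow> int \<Rightarrow> 'v \<Rightarrow> 'v) \<Rightarrow> 'v set \<Rightarrow> 'v set" where
  "rsr01 md M = {v. \<forall>w. \<exists>m::nat. \<forall>n ns. n \<in> {0, -1} \<and> length ns \<ge> m \<and> set ns \<subseteq> {0, -1}
      \<longrightarrow> md (iter md v ns) n w \<in> M}"

definition sr01 :: "('v \<Rightarrow> int \<Rightarrow> 'v \<Rightarrow> 'v) \<Rightarrow> 'v set \<Rightarrow> 'v set" where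
  "sr01 md M = lsr01 md M \<inter> rsr01 md M"

definition MZ01_subspace :: "('v \<Rightarrow> int \<Rightarrow> 'v \<Rightarrow> 'v) \<Rightarrow> 'v set \<Rightarrow> bool" where
  "MZ01_subspace md M \<longleftrightarrow> r01 md M = sr01 md M"

text \<open>The commutative algebra V/C_2(V) is handled through representatives:
a class a + C_2(V) has t-th power a_(-1) ... a_(-1) a + C_2(V) (t factors).\<close>
definition qpow :: "('v \<Rightarrow> int \<Rightarrow> 'v \<Rightarrow> 'v) \<Rightarrow> 'v \<Rightarrow> nat \<Rightarrow> 'v" where
  "qpow md a t = ((\<lambda>x. md a (-1) x) ^^ (t - 1)) a"

text \<open>Preimage in V of r(M/C_2(V)) (for M containing C_2(V)): classes a + C_2(V)
with (a + C_2(V))^t in M/C_2(V), i.e. a representative of the power lies in M.\<close>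
definition rquot :: "('v \<Rightarrow> int \<Rightarrow> 'v \<Rightarrow> 'v) \<Rightarrow> 'v set \<Rightarrow> 'v set" where
  "rquot md M = {a. \<exists>m::nat\<ge>1. \<forall>t\<ge>m. qpow md a t \<in> M}"

text \<open>A subset of V/C_2(V), given by its preimage I in V (a union of C_2-cosets),
is an ideal iff I is a subspace containing C_2(V) and closed under
multiplication by V, i.e. b_(-1) a in I for all b in V and a in I.\<close>
definition quot_ideal :: "(complex \<Rightarrow> 'v::ab_group_add \<Rightarrow> 'v) \<Rightarrow> ('v \<Rightarrow> int \<Rightarrow> 'v \<Rightarrow> 'v) \<Rightarrow> 'v set \<Rightarrow> bool" where
  "quot_ideal sc md I \<longleftrightarrow> module.subspace sc I \<and> C2 sc md \<subseteq> I \<and>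
     (\<forall>b a. a \<in> I \<longrightarrow> md b (-1) a \<in> I)"

end

theory Submission
  imports Defs "HOL-Analysis.Continuum_Not_Denumerable" "HOL-Computational_Algebra.Polynomial"
begin


locale qalg = vector_space sc for sc :: "complex \<Rightarrow> 'v::ab_group_add \<Rightarrow> 'v" +
  fixes C :: "'v set" and mul :: "'v \<Rightarrow> 'v \<Rightarrow> 'v" and one :: 'v
  assumes subC: "subspace C"
  and mul_add1: "mul (x + y) z = mul x z + mul y z"
  and mul_add2: "mul x (y + z) = mul x y + mul x z"
  and mul_sc1: "mul (sc a x) y = sc a (mul x y)"
  and mul_sc2: "mul x (sc a y) = sc a (mul x y)"
  and mul_C: "w \<in> C \<Longrightarrow> mul x w \<in> C"
  and comm: "mul x y - mul y x \<in> C"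
  and assoc: "mul (mul x y) z - mul y (mul x z) \<in> C"
  and one_l: "mul one x = x"
  and one_r: "mul x one = x"
begin

lemma mul_0_1[simp]: "mul 0 x = 0"
  by (metis add_cancel_right_right mul_add1)
lemma mul_0_2[simp]: "mul x 0 = 0"
  by (metis add_cancel_right_right mul_add2)
lemma mul_diff1: "mul (x - y) z = mul x z - mul y z"
  by (metis add_diff_cancel_right' diff_add_cancel mul_add1)
lemma mul_diff2: "mul z (x - y) = mul z x - mul z y"
  by (metis add_diff_cancel_right' diff_add_cancel mul_add2)

lemma C_add: "x \<in> C \<Longrightarrow> y \<in> C \<Longrightarrow> x + y \<in> C" using subC subspace_add by blast
lemma C_diff: "x \<in> C \<Longrightarrow> y \<in> C \<Longrightarrow> x - y \<in> C" using subC subspace_diff by blast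
lemma C_0: "0 \<in> C" using subC subspace_0 by blast

lemma mul_C1: "c \<in> C \<Longrightarrow> mul c x \<in> C"
proof -
  assume "c \<in> C"
  then have "mul x c \<in> C" by (rule mul_C)
  moreover have "mul c x - mul x c \<in> C" by (rule comm)
  ultimately show ?thesis using C_add by fastforce
qed

lemma pr_exists: "\<exists>\<pi>. Vector_Spaces.linear sc sc \<pi> \<and> (\<forall>x. \<pi> x = 0 \<longleftrightarrow> x \<in> C) \<and> (\<forall>x. \<pi> (\<pi> x) = \<pi> x)"
proof -
  obtain B0 where B0: "B0 \<subseteq> C" "independent B0" "C \<subseteq> span B0"
    using maximal_independent_subset by blast
  have spB0: "span B0 = C"
    using B0 span_minimal[OF B0(1) subC] by auto
  define B where "B = extend_basis B0"
  have B: "B0 \<subseteq> B" "independent B" "span B = UNIV"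
    using B0(2) extend_basis_superset independent_extend_basis span_extend_basis B_def by auto
  interpret vp: vector_space_pair sc sc by unfold_locales
  obtain g where g: "Vector_Spaces.linear sc sc g" "\<forall>x\<in>B. g x = (if x \<in> B0 then 0 else x)"
    using vp.linear_independent_extend[OF B(2), of "\<lambda>x. if x \<in> B0 then 0 else x"] by blast
  have g0: "g y = 0" if "y \<in> span B0" for y
  proof -
    have "g y = (\<lambda>_. 0) y"
      by (rule vp.linear_eq_on[OF g(1) vp.linear_zero that]) (use g(2) B(1) in auto)
    then show ?thesis by simp
  qed
  have gid: "g z = z" if "z \<in> span (B - B0)" for z
  proof -
    have "g z = (\<lambda>x. x) z"
      by (rule vp.linear_eq_on[OF g(1) linear_ident that]) (use g(2) in auto)
    then show ?thesis by simp
  qed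
  have dec: "\<exists>y z. y \<in> span B0 \<and> z \<in> span (B - B0) \<and> x = y + z" for x
  proof -
    have "x \<in> span (B0 \<union> (B - B0))" using B by (simp add: Un_absorb1)
    then show ?thesis unfolding span_Un by blast
  qed
  have gadd: "g (y + z) = g y + g z" for y z using g(1) vp.linear_add by blast
  show ?thesis
  proof (intro exI[of _ g] conjI allI)
    show "Vector_Spaces.linear sc sc g" by fact
  next
    fix x
    obtain y z where yz: "y \<in> span B0" "z \<in> span (B - B0)" "x = y + z" using dec by blast
    have gx: "g x = z" using yz g0 gid gadd by simp
    show "g (g x) = g x" using gx gid yz by simp
    show "g x = 0 \<longleftrightarrow> x \<in> C"
    proof
      assume "g x = 0" then have "z = 0" using gx by simp
      then show "x \<in> C" using yz spB0 by simp
    next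
      assume "x \<in> C" then show "g x = 0" using g0 spB0 by simp
    qed
  qed
qed

definition pr where "pr = (SOME \<pi>. Vector_Spaces.linear sc sc \<pi> \<and> (\<forall>x. \<pi> x = 0 \<longleftrightarrow> x \<in> C) \<and> (\<forall>x. \<pi> (\<pi> x) = \<pi> x))"

lemma pr_props: "Vector_Spaces.linear sc sc pr" "pr x = 0 \<longleftrightarrow> x \<in> C" "pr (pr x) = pr x"
  using someI_ex[OF pr_exists] unfolding pr_def[symmetric] by auto

interpretation vp: vector_space_pair sc sc by unfold_locales

lemma pr_lin: "Vector_Spaces.linear sc sc pr" by (rule pr_props)
lemma pr_add[simp]: "pr (x + y) = pr x + pr y" using vp.linear_add[OF pr_lin] by blast
lemma pr_diff[simp]: "pr (x - y) = pr x - pr y" using vp.linear_diff[OF pr_lin] by blast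
lemma pr_neg[simp]: "pr (- x) = - pr x" using vp.linear_neg[OF pr_lin] by blast
lemma pr_sc[simp]: "pr (sc c x) = sc c (pr x)" using vp.linear_scale[OF pr_lin] by blast
lemma pr_zero[simp]: "pr 0 = 0" using vp.linear_0[OF pr_lin] by blast
lemma pr_pr[simp]: "pr (pr x) = pr x" by (rule pr_props)
lemma pr_C: "pr x = 0 \<longleftrightarrow> x \<in> C" by (rule pr_props)
lemma pr_eq: "pr x = pr y \<longleftrightarrow> x - y \<in> C"
  using pr_C[of "x - y"] by auto
lemma pr_dC: "x - pr x \<in> C" using pr_eq[of x "pr x"] by simp

lemma pr_mem: assumes "subspace M" "C \<subseteq> M" shows "pr x \<in> M \<longleftrightarrow> x \<in> M"
proof -
  have "x - pr x \<in> M" using pr_dC assms by blast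
  then show ?thesis using assms(1) subspace_add subspace_diff
    by (metis add_diff_cancel_left' diff_add_cancel)
qed

definition m where "m x y = pr (mul x y)"

lemma m_pr1[simp]: "m (pr x) y = m x y"
proof -
  have "mul (pr x) y - mul x y \<in> C" using mul_C1[OF pr_dC[of x]] by (metis minus_diff_eq mul_diff1 subC subspace_neg)
  then show ?thesis unfolding m_def pr_eq .
qed
lemma m_pr2[simp]: "m x (pr y) = m x y"
proof -
  have "mul x (pr y) - mul x y \<in> C" using mul_C[OF pr_dC[of y]] by (metis minus_diff_eq mul_diff2 subC subspace_neg)
  then show ?thesis unfolding m_def pr_eq .
qed
lemma pr_mul_pr1[simp]: "pr (mul (pr x) y) = pr (mul x y)" using m_pr1 unfolding m_def .
lemma pr_mul_pr2[simp]: "pr (mul x (pr y)) = pr (mul x y)" using m_pr2 unfolding m_def .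
lemma pr_m[simp]: "pr (m x y) = m x y" unfolding m_def by simp
lemma m_comm: "m x y = m y x" unfolding m_def pr_eq by (rule comm)
lemma m_assoc: "m (m x y) z = m x (m y z)"
proof -
  have "m (m x y) z = m (m y x) z" by (simp add: m_comm)
  also have "\<dots> = pr (mul (mul y x) z)" by (metis m_def m_pr1)
  also have "\<dots> = pr (mul x (mul y z))" using assoc[of y x z] pr_eq by blast
  also have "\<dots> = m x (m y z)" by (metis m_def m_pr2)
  finally show ?thesis .
qed
lemma m_lcomm: "m x (m y z) = m y (m x z)"
  by (metis m_assoc m_comm)
lemmas m_ac = m_assoc m_comm m_lcomm

lemma m_add1[simp]: "m (x + y) z = m x z + m y z" unfolding m_def by (simp add: mul_add1)
lemma m_add2[simp]: "m z (x + y) = m z x + m z y" unfolding m_def by (simp add: mul_add2)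
lemma m_diff1[simp]: "m (x - y) z = m x z - m y z" unfolding m_def by (simp add: mul_diff1)
lemma m_diff2[simp]: "m z (x - y) = m z x - m z y" unfolding m_def by (simp add: mul_diff2)
lemma m_sc1[simp]: "m (sc c x) y = sc c (m x y)" unfolding m_def by (simp add: mul_sc1)
lemma m_sc2[simp]: "m x (sc c y) = sc c (m x y)" unfolding m_def by (simp add: mul_sc2)
lemma m_01[simp]: "m 0 x = 0" unfolding m_def by simp
lemma m_02[simp]: "m x 0 = 0" unfolding m_def by simp
lemma m_one1[simp]: "m one x = pr x" unfolding m_def by (simp add: one_l)
lemma m_one2[simp]: "m x one = pr x" unfolding m_def by (simp add: one_r)
lemma m_C1: "c \<in> C \<Longrightarrow> m c x = 0" unfolding m_def pr_C by (rule mul_C1)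
lemma m_C2: "c \<in> C \<Longrightarrow> m x c = 0" unfolding m_def pr_C by (rule mul_C)

definition pw where "pw x t = (mul x ^^ t) one"

lemma pw_0[simp]: "pw x 0 = one" by (simp add: pw_def)
lemma pw_Suc: "pw x (Suc t) = mul x (pw x t)" by (simp add: pw_def)
lemma pr_pw_Suc: "pr (pw x (Suc t)) = m x (pw x t)" by (simp add: pw_Suc m_def)

lemma pw_add: "pr (pw x (s + t)) = m (pw x s) (pw x t)"
proof (induction s)
  case 0 then show ?case by simp
next
  case (Suc s)
  have "pr (pw x (Suc s + t)) = m x (pw x (s + t))" by (simp add: pr_pw_Suc)
  also have "\<dots> = m x (pr (pw x (s + t)))" by simp
  also have "\<dots> = m (m x (pw x s)) (pw x t)" using Suc by (simp add: m_ac)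
  also have "\<dots> = m (pw x (Suc s)) (pw x t)" by (metis m_pr1 pr_pw_Suc)
  finally show ?case .
qed

lemma pw_mul: "pr (pw (mul x y) t) = m (pw x t) (pw y t)"
proof (induction t)
  case 0 then show ?case by (simp add: one_l)
next
  case (Suc t)
  have "pr (pw (mul x y) (Suc t)) = m (mul x y) (pr (pw (mul x y) t))" by (simp add: pr_pw_Suc)
  also have "\<dots> = m (m x y) (m (pw x t) (pw y t))" using Suc by (metis m_def m_pr1)
  also have "\<dots> = m (m x (pw x t)) (m y (pw y t))" by (simp add: m_ac)
  also have "\<dots> = m (pw x (Suc t)) (pw y (Suc t))" by (metis m_pr1 m_pr2 pr_pw_Suc)
  finally show ?case .
qed

lemma pw_cong: "pr x = pr y \<Longrightarrow> pr (pw x t) = pr (pw y t)"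
proof (induction t)
  case 0 then show ?case by simp
next
  case (Suc t)
  then show ?case by (metis m_pr1 m_pr2 pr_pw_Suc)
qed

lemma pw_sc: "pr (pw (sc c x) t) = sc (c ^ t) (pr (pw x t))"
proof (induction t)
  case 0 then show ?case by simp
next
  case (Suc t)
  have "pr (pw (sc c x) (Suc t)) = sc c (m x (pr (pw (sc c x) t)))" by (simp add: pr_pw_Suc)
  also have "\<dots> = sc (c ^ Suc t) (pr (pw x (Suc t)))" using Suc by (simp add: pr_pw_Suc)
  finally show ?case .
qed

lemma pw_C: "c \<in> C \<Longrightarrow> t \<ge> 1 \<Longrightarrow> pw c t \<in> C"
  by (cases t) (auto simp: pw_Suc mul_C1)

end


context vector_space begin

lemma indep_card_le_dim:
  assumes "T \<subseteq> span G" "finite G" "A \<subseteq> T" "independent A"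
  shows "finite A \<and> card A \<le> dim T"
proof -
  obtain B where B: "B \<subseteq> T" "independent B" "T \<subseteq> span B" "card B = dim T"
    using basis_exists by blast
  have fB: "finite B" using independent_span_bound[OF assms(2) B(2)] B(1) assms(1) by blast
  have "A \<subseteq> span B" using assms(3) B(3) by blast
  then show ?thesis using independent_span_bound[OF fB assms(4)] B(4) by simp
qed

lemma dim_sub_eq:
  assumes S: "subspace S" and ST: "S \<subseteq> T" and T: "T \<subseteq> span G" "finite G" and d: "dim T \<le> dim S"
  shows "T \<subseteq> S"
proof
  fix x assume x: "x \<in> T"
  show "x \<in> S"
  proof (rule ccontr)
    assume nx: "x \<notin> S"
    obtain B where B: "B \<subseteq> S" "independent B" "S \<subseteq> span B" "card B = dim S"
      using basis_exists by blast
    have "span B \<subseteq> S" using span_minimal[OF B(1) S] .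
    then have "x \<notin> span B" using nx by blast
    then have ind: "independent (insert x B)" using independent_insertI B(2) by blast
    have sub: "insert x B \<subseteq> T" using x B(1) ST by blast
    have c: "finite (insert x B) \<and> card (insert x B) \<le> dim T"
      using indep_card_le_dim[OF T sub ind] .
    have "x \<notin> B" using nx B(1) by blast
    then have "card (insert x B) = Suc (card B)" using c by simp
    then show False using c d B(4) by simp
  qed
qed

lemma dim_inj:
  assumes lin: "Vector_Spaces.linear scale scale h" and S: "subspace S"
    and inj0: "\<And>x. x \<in> S \<Longrightarrow> h x = 0 \<Longrightarrow> x = 0"
    and im: "h ` S \<subseteq> span G" and G: "finite G"
  shows "dim S \<le> card G \<and> (\<exists>B. finite B \<and> S \<subseteq> span B)"
proof -
  interpret vp: vector_space_pair scale scale by unfold_locales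
  obtain B where B: "B \<subseteq> S" "independent B" "S \<subseteq> span B" "card B = dim S"
    using basis_exists by blast
  have spB: "span B \<subseteq> S" using span_minimal[OF B(1) S] .
  have "inj_on h (span B)"
    using vp.linear_inj_on_iff_eq_0[OF lin subspace_span] spB inj0 by blast
  then have ind: "independent (h ` B)" using vp.linear_independent_injective_image[OF lin B(2)] by blast
  have injB: "inj_on h B" using \<open>inj_on h (span B)\<close> span_superset inj_on_subset by blast
  have "h ` B \<subseteq> span G" using im B(1) by blast
  then have "finite (h ` B) \<and> card (h ` B) \<le> card G" using independent_span_bound[OF G ind] by blast
  then have "finite B" "card B \<le> card G" using injB finite_imageD card_image by metis+
  then show ?thesis using B by auto
qed

lemma chain_inc:
  fixes P :: "nat \<Rightarrow> 'b set"
  assumes sub: "\<And>t. subspace (P t)" and mono: "\<And>s t. s \<le> t \<Longrightarrow> P s \<subseteq> P t"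
    and fin: "\<And>t. \<exists>G. finite G \<and> P t \<subseteq> span G" and bd: "\<And>t. dim (P t) \<le> d"
  shows "\<exists>T. \<forall>t\<ge>T. P t \<subseteq> P T"
proof -
  let ?D = "Max (range (\<lambda>t. dim (P t)))"
  have finr: "finite (range (\<lambda>t. dim (P t)))"
    by (rule finite_subset[of _ "{..d}"]) (use bd in auto)
  have "?D \<in> range (\<lambda>t. dim (P t))" using Max_in[OF finr] by blast
  then obtain T where T: "dim (P T) = ?D" by auto
  have "P t \<subseteq> P T" if "t \<ge> T" for t
  proof -
    obtain G where G: "finite G" "P t \<subseteq> span G" using fin by blast
    have "dim (P t) \<le> dim (P T)" using T Max_ge[OF finr] by simp
    then show ?thesis using dim_sub_eq[OF sub mono[OF that] G(2) G(1)] by blast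
  qed
  then show ?thesis by blast
qed

lemma chain_dec:
  fixes P :: "nat \<Rightarrow> 'b set"
  assumes sub: "\<And>t. subspace (P t)" and anti: "\<And>s t. s \<le> t \<Longrightarrow> P t \<subseteq> P s"
    and fin: "finite G" "P 0 \<subseteq> span G"
  shows "\<exists>T. \<forall>t\<ge>T. P T \<subseteq> P t"
proof -
  let ?D = "LEAST n. \<exists>t. dim (P t) = n"
  have "\<exists>t. dim (P t) = ?D" by (rule LeastI_ex) blast
  then obtain T where T: "dim (P T) = ?D" by blast
  have le: "dim (P T) \<le> dim (P t)" for t using T by (metis (mono_tags, lifting) Least_le)
  have "P T \<subseteq> P t" if "t \<ge> T" for t
  proof -
    have "P T \<subseteq> span G" using anti[of 0 T] fin by blast
    then show ?thesis using dim_sub_eq[OF sub anti[OF that] _ fin(1) le] by blast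
  qed
  then show ?thesis by blast
qed

end


context qalg begin

interpretation vp: vector_space_pair sc sc by unfold_locales

lemma lin_intro:
  assumes "\<And>x y. f (x + y) = f x + f y" "\<And>c x. f (sc c x) = sc c (f x)"
  shows "Vector_Spaces.linear sc sc f"
  unfolding Vector_Spaces.linear_iff using assms vector_space_axioms by auto

lemma lin_pm2: "Vector_Spaces.linear sc sc (\<lambda>p. pr (mul x p))"
  by (rule lin_intro) (simp_all add: mul_add2 mul_sc2)
lemma lin_pm1: "Vector_Spaces.linear sc sc (\<lambda>p. pr (mul p x))"
  by (rule lin_intro) (simp_all add: mul_add1 mul_sc1)

definition Rs where "Rs M = {a. \<exists>k. \<forall>t\<ge>k. pw a t \<in> M}"
definition Ls where "Ls M = {a. \<forall>b. \<exists>k. \<forall>t\<ge>k. mul b (pw a t) \<in> M}"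

lemma Ls_Rs: "Ls M \<subseteq> Rs M"
proof
  fix a assume "a \<in> Ls M"
  then obtain k where "\<forall>t\<ge>k. mul one (pw a t) \<in> M" unfolding Ls_def by blast
  then show "a \<in> Rs M" unfolding Rs_def using one_l by auto
qed

context
  fixes M F
  assumes Msub: "subspace M" and CM: "C \<subseteq> M" and finF: "finite F" and MF: "M \<subseteq> span (C \<union> F)"
begin

lemma prM: "x \<in> M \<longleftrightarrow> pr x \<in> M" using pr_mem[OF Msub CM] by simp

lemma prM_span: "pr ` M \<subseteq> span (pr ` F)"
proof
  fix y assume "y \<in> pr ` M"
  then obtain x where x: "x \<in> M" "y = pr x" by blast
  have "pr x \<in> pr ` span (C \<union> F)" using x MF by blast
  also have "\<dots> = span (pr ` (C \<union> F))" using vp.linear_span_image[OF pr_lin] by simp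
  also have "\<dots> \<subseteq> span (insert 0 (pr ` F))"
    by (rule span_mono) (use pr_C in auto)
  finally show "y \<in> span (pr ` F)" using x by simp
qed

lemma rho:
  assumes a: "a \<in> Rs M"
  shows "\<exists>K \<rho>. pr (pw a K) = m (pw a (Suc K)) \<rho>"
proof -
  obtain k0 where k0: "\<And>t. t \<ge> k0 \<Longrightarrow> pw a t \<in> M" using a unfolding Rs_def by blast
  define Pol where "Pol = span (range (pw a))"
  have Pol_mul: "mul a p \<in> Pol" if "p \<in> Pol" for p
    using that unfolding Pol_def
  proof (induction rule: span_induct_alt)
    case base then show ?case by (simp add: span_zero)
  next
    case (step c x y)
    then obtain j where "x = pw a j" by blast
    then have "mul a x \<in> span (range (pw a))" by (metis pw_Suc rangeI span_base)
    then show ?case using step by (simp add: mul_add2 mul_sc2 span_add span_scale)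
  qed
  have PolM: "\<forall>n\<ge>k0. mul (pw a n) p \<in> M" if "p \<in> Pol" for p
    using that unfolding Pol_def
  proof (induction rule: span_induct_alt)
    case base then show ?case using Msub subspace_0 by simp
  next
    case (step c x y)
    then obtain j where j: "x = pw a j" by blast
    show ?case
    proof (intro allI impI)
      fix n assume n: "n \<ge> k0"
      have "pr (mul (pw a n) x) = pr (pw a (n + j))" using j pw_add m_def by simp
      moreover have "pw a (n + j) \<in> M" using k0 n by simp
      ultimately have "mul (pw a n) x \<in> M" using prM by metis
      then show "mul (pw a n) (sc c x + y) \<in> M"
        using step n Msub by (simp add: mul_add2 mul_sc2 subspace_add subspace_scale)
    qed
  qed
  define Z where "Z t = (\<lambda>p. pr (mul (pw a (k0 + t)) p)) ` Pol" for t
  have Zsub: "subspace (Z t)" for t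
    unfolding Z_def Pol_def by (rule vp.linear_subspace_image[OF lin_pm2]) simp
  have Zstep: "Z (Suc t) \<subseteq> Z t" for t
  proof
    fix y assume "y \<in> Z (Suc t)"
    then obtain p where p: "p \<in> Pol" "y = pr (mul (pw a (k0 + Suc t)) p)" unfolding Z_def by blast
    have "y = m (pw a (Suc (k0 + t))) p" using p m_def by simp
    also have "\<dots> = m (m a (pw a (k0 + t))) p" by (metis m_pr1 pr_pw_Suc)
    also have "\<dots> = m (pw a (k0 + t)) (m a p)" by (simp add: m_ac)
    also have "\<dots> = pr (mul (pw a (k0 + t)) (mul a p))" by (metis m_def m_pr2)
    finally show "y \<in> Z t" unfolding Z_def using Pol_mul[OF p(1)] by blast
  qed
  have Zanti: "Z t \<subseteq> Z s" if "s \<le> t" for s t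
    using lift_Suc_antimono_le[of Z, OF Zstep that] .
  have Z0: "Z 0 \<subseteq> span (pr ` F)"
  proof
    fix y assume "y \<in> Z 0"
    then obtain p where p: "p \<in> Pol" "y = pr (mul (pw a k0) p)" unfolding Z_def by auto
    then have "mul (pw a k0) p \<in> M" using PolM by blast
    then show "y \<in> span (pr ` F)" using p prM_span by blast
  qed
  obtain T where T: "\<And>t. t \<ge> T \<Longrightarrow> Z T \<subseteq> Z t"
    using chain_dec[of Z, OF Zsub Zanti _ Z0] finF by blast
  have "one \<in> Pol" unfolding Pol_def by (metis pw_0 rangeI span_base)
  then have "pr (mul (pw a (k0 + T)) one) \<in> Z T" unfolding Z_def by blast
  then have "pr (pw a (k0 + T)) \<in> Z (Suc T)" using T[of "Suc T"] one_r by auto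
  then obtain p where "pr (pw a (k0 + T)) = pr (mul (pw a (k0 + Suc T)) p)" unfolding Z_def by blast
  then have "pr (pw a (k0 + T)) = m (pw a (Suc (k0 + T))) p" by (simp add: m_def)
  then show ?thesis by blast
qed

end

lemma rho_iter:
  assumes r: "pr (pw a K) = m (pw a (Suc K)) \<rho>"
  shows "pr (pw a K) = m (pw a (K + j)) (pw \<rho> j)"
proof (induction j)
  case 0 then show ?case by simp
next
  case (Suc j)
  have "m (pw a (K + Suc j)) (pw \<rho> (Suc j)) = m (pr (pw a (Suc K + j))) (pr (pw \<rho> (Suc j)))"
    by simp
  also have "\<dots> = m (m (pw a (Suc K)) (pw a j)) (m \<rho> (pw \<rho> j))"
    by (simp only: pw_add pr_pw_Suc)
  also have "\<dots> = m (m (m (pw a (Suc K)) \<rho>) (pw a j)) (pw \<rho> j)" by (simp add: m_ac)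
  also have "\<dots> = m (m (pr (pw a K)) (pw a j)) (pw \<rho> j)" using r by simp
  also have "\<dots> = m (pr (pw a (K + j))) (pw \<rho> j)" by (simp only: pw_add m_pr1)
  also have "\<dots> = pr (pw a K)" using Suc by simp
  finally show ?case by simp
qed

end


context qalg begin

interpretation vp: vector_space_pair sc sc by unfold_locales

context
  fixes M F
  assumes Msub: "subspace M" and CM: "C \<subseteq> M" and finF: "finite F" and MF: "M \<subseteq> span (C \<union> F)"
begin

lemma prM': "x \<in> M \<longleftrightarrow> pr x \<in> M" using pr_mem[OF Msub CM] by simp

lemma uniform:
  assumes aL: "a \<in> Ls M"
  shows "\<exists>T. \<forall>t\<ge>T. \<forall>b. mul b (pw a t) \<in> M"
proof -
  have "a \<in> Rs M" using aL Ls_Rs by blast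
  then obtain K \<rho> where r: "pr (pw a K) = m (pw a (Suc K)) \<rho>"
    using rho[OF Msub CM finF MF] by blast
  define S where "S t = {x. \<forall>s\<ge>t. mul x (pw a s) \<in> M}" for t
  have Ssub: "subspace (S t)" for t
  proof (rule subspaceI)
    show "0 \<in> S t" unfolding S_def using Msub subspace_0 by simp
    show "x + y \<in> S t" if "x \<in> S t" "y \<in> S t" for x y
      using that Msub unfolding S_def by (simp add: mul_add1 subspace_add)
    show "sc c x \<in> S t" if "x \<in> S t" for c x
      using that Msub unfolding S_def by (simp add: mul_sc1 subspace_scale)
  qed
  have Smono: "S s \<subseteq> S t" if "s \<le> t" for s t using that unfolding S_def by auto
  define E where "E t = (\<lambda>x. pr (mul (pw a K) x)) ` S t" for t
  have Esub: "subspace (E t)" for t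
    unfolding E_def by (rule vp.linear_subspace_image[OF lin_pm2 Ssub])
  have Emono: "E s \<subseteq> E t" if "s \<le> t" for s t unfolding E_def using Smono[OF that] by blast
  have Ebd: "dim (E t) \<le> card (pr ` F) \<and> (\<exists>B. finite B \<and> E t \<subseteq> span B)" for t
  proof (rule dim_inj[OF lin_pm1[of "pw a t"] Esub])
    show "finite (pr ` F)" using finF by simp
  next
    fix y assume y: "y \<in> E t" "pr (mul y (pw a t)) = 0"
    then obtain x where x: "x \<in> S t" "y = pr (mul (pw a K) x)" unfolding E_def by blast
    have z: "m (m (pw a K) x) (pw a t) = 0" using y(2) x(2) by (simp add: m_def)
    have "y = m (pr (pw a K)) x" using x by (metis m_def m_pr1)
    also have "\<dots> = m (m (pw a (K + t)) (pw \<rho> t)) x" using rho_iter[OF r, of t] by simp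
    also have "\<dots> = m (m (pr (pw a (K + t))) (pw \<rho> t)) x" by simp
    also have "\<dots> = m (m (m (pw a K) (pw a t)) (pw \<rho> t)) x" by (simp only: pw_add)
    also have "\<dots> = m (m (m (pw a K) x) (pw a t)) (pw \<rho> t)" by (simp add: m_ac)
    also have "\<dots> = 0" using z by simp
    finally show "y = 0" .
  next
    show "(\<lambda>y. pr (mul y (pw a t))) ` E t \<subseteq> span (pr ` F)"
    proof
      fix z assume "z \<in> (\<lambda>y. pr (mul y (pw a t))) ` E t"
      then obtain x where x: "x \<in> S t" "z = pr (mul (pr (mul (pw a K) x)) (pw a t))" unfolding E_def by blast
      have "z = m (m (pw a K) x) (pw a t)" using x by (simp add: m_def)
      also have "\<dots> = m x (m (pw a K) (pw a t))" by (simp add: m_ac)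
      also have "\<dots> = m x (pr (pw a (K + t)))" by (simp only: pw_add)
      also have "\<dots> = pr (mul x (pw a (K + t)))" by (simp add: m_def)
      finally have "z = pr (mul x (pw a (K + t)))" .
      moreover have "mul x (pw a (K + t)) \<in> M" using x(1) unfolding S_def by simp
      ultimately show "z \<in> span (pr ` F)" using prM_span[OF Msub CM finF MF] by blast
    qed
  qed
  obtain T0 where T0: "\<And>t. t \<ge> T0 \<Longrightarrow> E t \<subseteq> E T0"
    using chain_inc[of E, OF Esub Emono] Ebd by blast
  have "mul b (pw a t) \<in> M" if t: "t \<ge> K + T0" for t b
  proof -
    obtain kb where kb: "\<And>s. s \<ge> kb \<Longrightarrow> mul b (pw a s) \<in> M" using aL unfolding Ls_def by blast
    have "b \<in> S (max kb T0)" unfolding S_def using kb by simp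
    then have "pr (mul (pw a K) b) \<in> E T0" using T0[of "max kb T0"] unfolding E_def by auto
    then obtain x where x: "x \<in> S T0" "pr (mul (pw a K) b) = pr (mul (pw a K) x)" unfolding E_def by blast
    have tt: "t = K + (t - K)" using t by simp
    have "pr (mul b (pw a t)) = m b (pr (pw a (K + (t - K))))" using tt by (simp add: m_def)
    also have "\<dots> = m b (m (pw a K) (pw a (t - K)))" by (simp only: pw_add)
    also have "\<dots> = m (pr (mul (pw a K) b)) (pw a (t - K))" by (simp add: m_ac m_def[symmetric])
    also have "\<dots> = m (pr (mul (pw a K) x)) (pw a (t - K))" using x by simp
    also have "\<dots> = m x (m (pw a K) (pw a (t - K)))" by (simp add: m_ac m_def[symmetric])
    also have "\<dots> = m x (pr (pw a (K + (t - K))))" by (simp only: pw_add)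
    also have "\<dots> = pr (mul x (pw a t))" using tt by (simp add: m_def)
    finally have "pr (mul b (pw a t)) = pr (mul x (pw a t))" .
    moreover have "mul x (pw a t) \<in> M" using x(1) t unfolding S_def by simp
    ultimately show ?thesis using prM' by metis
  qed
  then show ?thesis by blast
qed

lemma ideal_of_eq:
  assumes eq: "Rs M = Ls M"
  shows "subspace (Rs M) \<and> (\<forall>a b. a \<in> Rs M \<longrightarrow> mul b a \<in> Rs M)"
proof (intro conjI allI impI)
  fix a b assume "a \<in> Rs M"
  then obtain T where T: "\<And>t b. t \<ge> T \<Longrightarrow> mul b (pw a t) \<in> M" using uniform eq by blast
  have "pw (mul b a) t \<in> M" if "t \<ge> T" for t
  proof -
    have "pr (pw (mul b a) t) = pr (mul (pw b t) (pw a t))" by (simp add: pw_mul m_def)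
    then show ?thesis using T[OF that] prM' by metis
  qed
  then show "mul b a \<in> Rs M" unfolding Rs_def by blast
next
  show "subspace (Rs M)"
  proof (rule subspaceI)
    have "pw 0 t \<in> M" if "t \<ge> 1" for t
      using that Msub subspace_0 by (cases t) (auto simp: pw_Suc)
    then show "0 \<in> Rs M" unfolding Rs_def by blast
  next
    fix c x assume "x \<in> Rs M"
    then obtain k where k: "\<And>t. t \<ge> k \<Longrightarrow> pw x t \<in> M" unfolding Rs_def by blast
    have "pw (sc c x) t \<in> M" if "t \<ge> k" for t
    proof -
      have "pr (pw x t) \<in> M" using k[OF that] prM' by blast
      then have "pr (pw (sc c x) t) \<in> M" using pw_sc Msub subspace_scale by metis
      then show ?thesis using prM' by blast
    qed
    then show "sc c x \<in> Rs M" unfolding Rs_def by blast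
  next
    fix x y assume xy: "x \<in> Rs M" "y \<in> Rs M"
    obtain Tx where Tx: "\<And>t b. t \<ge> Tx \<Longrightarrow> mul b (pw x t) \<in> M" using uniform eq xy(1) by blast
    obtain Ty where Ty: "\<And>t b. t \<ge> Ty \<Longrightarrow> mul b (pw y t) \<in> M" using uniform eq xy(2) by blast
    define G where "G n = {mul (pw x i) (pw y j) | i j. i + j = n}" for n
    have step: "\<exists>z'\<in>span (G (Suc n)). m (x + y) z = pr z'" if "z \<in> span (G n)" for n z
      using that
    proof (induction rule: span_induct_alt)
      case base then show ?case by (intro bexI[of _ 0]) (auto simp: span_zero)
    next
      case (step c g w)
      then obtain w' where w': "w' \<in> span (G (Suc n))" "m (x + y) w = pr w'" by blast
      from step obtain i j where ij: "i + j = n" "g = mul (pw x i) (pw y j)" unfolding G_def by blast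
      define g1 where "g1 = mul (pw x (Suc i)) (pw y j)"
      define g2 where "g2 = mul (pw x i) (pw y (Suc j))"
      have g1G: "g1 \<in> G (Suc n)" unfolding G_def g1_def using ij by force
      have g2G: "g2 \<in> G (Suc n)" unfolding G_def g2_def using ij by force
      have e1: "m x g = pr g1"
      proof -
        have "m x g = m x (m (pw x i) (pw y j))" using ij by (metis m_def m_pr2)
        also have "\<dots> = m (m x (pw x i)) (pw y j)" by (simp add: m_ac)
        also have "\<dots> = pr g1" unfolding g1_def by (metis m_def m_pr1 pr_pw_Suc)
        finally show ?thesis .
      qed
      have e2: "m y g = pr g2"
      proof -
        have "m y g = m y (m (pw x i) (pw y j))" using ij by (metis m_def m_pr2)
        also have "\<dots> = m (pw x i) (m y (pw y j))" by (simp add: m_ac)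
        also have "\<dots> = pr g2" unfolding g2_def by (metis m_def m_pr2 pr_pw_Suc)
        finally show ?thesis .
      qed
      have "m (x + y) (sc c g + w) = pr (sc c (g1 + g2) + w')"
        using e1 e2 w' by simp
      moreover have "sc c (g1 + g2) + w' \<in> span (G (Suc n))"
        using g1G g2G w' by (simp add: span_add span_scale span_base)
      ultimately show ?case by blast
    qed
    have pws: "\<exists>z\<in>span (G n). pr (pw (x + y) n) = pr z" for n
    proof (induction n)
      case 0
      have "one \<in> G 0" unfolding G_def using one_l by force
      then show ?case using one_l by (intro bexI[of _ one]) (auto simp: span_base)
    next
      case (Suc n)
      then obtain z where z: "z \<in> span (G n)" "pr (pw (x + y) n) = pr z" by blast
      have "pr (pw (x + y) (Suc n)) = m (x + y) z" using z(2) by (metis m_pr2 pr_pw_Suc)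
      then show ?case using step[OF z(1)] by metis
    qed
    have GM: "span (G n) \<subseteq> M" if n: "n \<ge> Tx + Ty" for n
    proof (rule span_minimal[OF _ Msub])
      show "G n \<subseteq> M"
      proof
        fix g assume "g \<in> G n"
        then obtain i j where ij: "i + j = n" "g = mul (pw x i) (pw y j)" unfolding G_def by blast
        show "g \<in> M"
        proof (cases "i \<ge> Tx")
          case True
          then have "mul (pw y j) (pw x i) \<in> M" using Tx by blast
          moreover have "pr g = pr (mul (pw y j) (pw x i))" using ij m_comm m_def by metis
          ultimately show ?thesis using prM' by metis
        next
          case False
          then have "j \<ge> Ty" using ij n by simp
          then show ?thesis using Ty ij by blast
        qed
      qed
    qed
    have "pw (x + y) n \<in> M" if "n \<ge> Tx + Ty" for n
    proof -
      obtain z where "z \<in> span (G n)" "pr (pw (x + y) n) = pr z" using pws by blast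
      then show ?thesis using GM[OF that] prM' by (metis subsetD)
    qed
    then show "x + y \<in> Rs M" unfolding Rs_def by blast
  qed
qed

end
end


context qalg begin

interpretation vp: vector_space_pair sc sc by unfold_locales
interpretation vp2: vector_space_pair sc "(*) :: complex \<Rightarrow> complex \<Rightarrow> complex"
  by unfold_locales (auto simp: algebra_simps)

lemma functional_exists:
  assumes Msub: "subspace M" and x: "x \<notin> M"
  shows "\<exists>f. Vector_Spaces.linear sc (*) f \<and> (\<forall>y\<in>M. f y = 0) \<and> f x \<noteq> 0"
proof -
  obtain B0 where B0: "B0 \<subseteq> M" "independent B0" "M \<subseteq> span B0"
    using maximal_independent_subset by blast
  have "span B0 \<subseteq> M" using span_minimal[OF B0(1) Msub] .
  then have xs: "x \<notin> span B0" using x by blast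
  then have ind: "independent (insert x B0)" using independent_insertI B0(2) by blast
  obtain f where f: "Vector_Spaces.linear sc (*) f" "\<forall>v\<in>insert x B0. f v = (if v = x then 1 else 0)"
    using vp2.linear_independent_extend[OF ind, of "\<lambda>v. if v = x then 1 else 0"] by blast
  have xB: "x \<notin> B0" using xs span_base by blast
  have "f y = 0" if "y \<in> M" for y
  proof -
    have "f y = (\<lambda>_. 0) y"
      by (rule vp2.linear_eq_on[OF f(1) vp2.linear_zero]) (use that B0 f(2) xB in auto)
    then show ?thesis by simp
  qed
  moreover have "f x \<noteq> 0" using f(2) by simp
  ultimately show ?thesis using f(1) by blast
qed

primrec Pl :: "('v \<Rightarrow> complex) \<Rightarrow> 'v \<Rightarrow> nat \<Rightarrow> 'v \<Rightarrow> complex poly" where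
  "Pl f b 0 x = [: f x :]"
| "Pl f b (Suc t) x = Pl f b t x + pCons 0 (Pl f b t (mul x b))"

lemma coeff_Pl: "coeff (Pl f b t x) 0 = f x \<and> coeff (Pl f b t x) 1 = of_nat t * f (mul x b)"
proof (induction t arbitrary: x)
  case 0 then show ?case by simp
next
  case (Suc t)
  then show ?case by (simp add: algebra_simps)
qed

lemma poly_Pl:
  assumes f: "Vector_Spaces.linear sc (*) f" and fC: "\<And>c. c \<in> C \<Longrightarrow> f c = 0"
  shows "poly (Pl f b t x) l = f (mul x (pw (one + sc l b) t))"
proof (induction t arbitrary: x)
  case 0 then show ?case by (simp add: one_r)
next
  case (Suc t)
  have fpr: "f z = f (pr z)" for z
  proof -
    have "f (z - pr z) = 0" using fC pr_dC by blast
    then show ?thesis using vp2.linear_diff[OF f] by simp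
  qed
  have fsc: "f (sc c z) = c * f z" for c z using vp2.linear_scale[OF f] by simp
  have fadd: "f (z + w) = f z + f w" for z w using vp2.linear_add[OF f] by simp
  let ?y = "one + sc l b"
  have "pr (mul x (pw ?y (Suc t))) = m x (m ?y (pw ?y t))" by (simp add: m_def pw_Suc)
  also have "\<dots> = m (m x ?y) (pw ?y t)" by (simp add: m_ac)
  also have "\<dots> = pr (mul x (pw ?y t)) + sc l (pr (mul (mul x b) (pw ?y t)))"
    by (simp add: m_def mul_add2 mul_sc2 mul_add1 mul_sc1 one_r)
  finally have "f (mul x (pw ?y (Suc t))) = f (mul x (pw ?y t)) + l * f (mul (mul x b) (pw ?y t))"
    by (metis fadd fpr fsc)
  then show ?case using Suc by simp
qed

lemma L_of_ideal:
  assumes Msub: "subspace M" and CM: "C \<subseteq> M"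
    and Rsub: "subspace (Rs M)" and Rid: "\<And>a b. a \<in> Rs M \<Longrightarrow> mul b a \<in> Rs M"
  shows "Rs M \<subseteq> Ls M"
proof
  fix a assume aR: "a \<in> Rs M"
  have prM: "x \<in> M \<longleftrightarrow> pr x \<in> M" for x using pr_mem[OF Msub CM] by simp
  show "a \<in> Ls M" unfolding Ls_def
  proof (intro allI CollectI)
    fix b
    define y where "y l = a + sc l (mul b a)" for l
    have yR: "y l \<in> Rs M" for l
      unfolding y_def using Rsub aR Rid[OF aR] by (simp add: subspace_add subspace_scale)
    define Lam where "Lam t = {l. \<forall>s\<ge>t. pw (y l) s \<in> M}" for t
    have "(\<Union>t. Lam t) = UNIV" using yR unfolding Lam_def Rs_def by blast
    have "\<exists>T. infinite (Lam T)"
    proof (rule ccontr)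
      assume "\<not> (\<exists>T. infinite (Lam T))"
      then have "\<And>T. countable (Lam T)" using countable_finite by blast
      then have "countable (\<Union>t. Lam t)" by (intro countable_UN) auto
      then show False using \<open>(\<Union>t. Lam t) = UNIV\<close> uncountable_UNIV_complex by simp
    qed
    then obtain T where T: "infinite (Lam T)" by blast
    have "mul b (pw a t) \<in> M" if t: "t \<ge> max T 1" for t
    proof (rule ccontr)
      assume nM: "mul b (pw a t) \<notin> M"
      obtain f where f: "Vector_Spaces.linear sc (*) f" "\<forall>z\<in>M. f z = 0" "f (mul b (pw a t)) \<noteq> 0"
        using functional_exists[OF Msub nM] by blast
      have fC: "\<And>c. c \<in> C \<Longrightarrow> f c = 0" using f(2) CM by blast
      have fpr: "f z = f (pr z)" for z
      proof -
        have "f (z - pr z) = 0" using fC pr_dC by blast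
        then show ?thesis using vp2.linear_diff[OF f(1)] by simp
      qed
      define p where "p = Pl f b t (pw a t)"
      have root: "poly p l = 0" if l: "l \<in> Lam T" for l
      proof -
        have "poly p l = f (mul (pw a t) (pw (one + sc l b) t))"
          unfolding p_def by (rule poly_Pl[OF f(1) fC])
        also have "\<dots> = f (pr (mul (pw a t) (pw (one + sc l b) t)))" by (rule fpr)
        also have "pr (mul (pw a t) (pw (one + sc l b) t)) = pr (pw (mul a (one + sc l b)) t)"
          by (simp add: pw_mul m_def)
        also have "\<dots> = pr (pw (y l) t)"
        proof (rule pw_cong)
          have "pr (mul a b) = pr (mul b a)" using m_comm m_def by metis
          then show "pr (mul a (one + sc l b)) = pr (y l)"
            unfolding y_def by (simp add: mul_add2 mul_sc2 one_r)
        qed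
        also have "f \<dots> = 0"
        proof -
          have "pw (y l) t \<in> M" using l t unfolding Lam_def by simp
          then show ?thesis using f(2) prM by blast
        qed
        finally show ?thesis .
      qed
      have "p = 0"
      proof (rule ccontr)
        assume "p \<noteq> 0"
        then have "finite {l. poly p l = 0}" by (rule poly_roots_finite)
        moreover have "Lam T \<subseteq> {l. poly p l = 0}" using root by blast
        ultimately show False using T finite_subset by blast
      qed
      then have "of_nat t * f (mul (pw a t) b) = 0" using coeff_Pl[of f b t "pw a t"] unfolding p_def by simp
      then have "f (mul (pw a t) b) = 0" using t by simp
      moreover have "f (mul (pw a t) b) = f (mul b (pw a t))"
        using fpr m_comm m_def by metis
      ultimately show False using f(3) by simp
    qed
    then show "\<exists>k. \<forall>t\<ge>k. mul b (pw a t) \<in> M" by blast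
  qed
qed

end


lemma sum_upto2: fixes N :: nat and g :: "nat \<Rightarrow> 'a::comm_monoid_add"
  shows "1 \<le> N \<Longrightarrow> (\<And>i. 2 \<le> i \<Longrightarrow> g i = 0) \<Longrightarrow> sum g {0..N} = g 0 + g 1"
proof -
  assume N: "1 \<le> N" and z: "\<And>i. 2 \<le> i \<Longrightarrow> g i = 0"
  have "sum g {0..N} = sum g {0..<2}"
    by (rule sum.mono_neutral_right) (use N z in auto)
  then show ?thesis by (simp add: numeral_2_eq_2)
qed

lemma sum_upto1: fixes N :: nat and g :: "nat \<Rightarrow> 'a::comm_monoid_add"
  shows "(\<And>i. 1 \<le> i \<Longrightarrow> g i = 0) \<Longrightarrow> sum g {0..N} = g 0"
proof -
  assume z: "\<And>i. 1 \<le> i \<Longrightarrow> g i = 0"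
  have "sum g {0..N} = sum g {0}"
    by (rule sum.mono_neutral_right) (use z in auto)
  then show ?thesis by simp
qed

context vertex_algebra begin

lemma md_0l[simp]: "md 0 n v = 0" by (metis add_cancel_right_right md_add_left)
lemma md_0r[simp]: "md u n 0 = 0" by (metis add_cancel_right_right md_add_right)
lemma md_diff_r: "md u n (v - v') = md u n v - md u n v'"
  by (metis add_diff_cancel_right' diff_add_cancel md_add_right)
lemma md_diff_l: "md (u - u') n v = md u n v - md u' n v"
  by (metis add_diff_cancel_right' diff_add_cancel md_add_left)
lemma md_neg_r: "md u n (- v) = - md u n v" by (metis diff_0 md_0r md_diff_r)

abbreviation "CC \<equiv> C2 sc md"

lemma CC_sub: "subspace CC" unfolding C2_def by simp
lemma CC_add: "x \<in> CC \<Longrightarrow> y \<in> CC \<Longrightarrow> x + y \<in> CC" unfolding C2_def by (rule span_add)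
lemma CC_diff: "x \<in> CC \<Longrightarrow> y \<in> CC \<Longrightarrow> x - y \<in> CC" unfolding C2_def by (rule span_diff)
lemma CC_neg: "x \<in> CC \<Longrightarrow> - x \<in> CC" unfolding C2_def by (rule span_neg)
lemma CC_sc: "x \<in> CC \<Longrightarrow> sc c x \<in> CC" unfolding C2_def by (rule span_scale)
lemma CC_0: "0 \<in> CC" unfolding C2_def by (rule span_zero)
lemma CC_gen: "md u (-2) v \<in> CC" unfolding C2_def by (rule span_base) blast

lemma sum_CC: fixes N :: nat shows "(\<And>i. 1 \<le> i \<Longrightarrow> g i \<in> CC) \<Longrightarrow> sum g {0..N} - g 0 \<in> CC"
proof -
  assume h: "\<And>i. 1 \<le> i \<Longrightarrow> g i \<in> CC"
  have "sum g {0..N} = g 0 + sum g {Suc 0..N}" by (rule sum.atLeast_Suc_atMost) simp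
  moreover have "sum g {Suc 0..N} \<in> CC" unfolding C2_def by (rule span_sum) (use h in \<open>auto simp: C2_def\<close>)
  ultimately show ?thesis by simp
qed

lemma sc_solve: "x + sc c y = 0 \<Longrightarrow> c \<noteq> 0 \<Longrightarrow> y = sc (- 1 / c) x"
proof -
  assume h: "x + sc c y = 0" "c \<noteq> 0"
  then have "x = - sc c y" by (simp add: eq_neg_iff_add_eq_0)
  then have "sc (- 1 / c) x = sc ((1 / c) * c) y" by (simp add: scale_minus_right)
  then show ?thesis using h(2) by simp
qed

lemma D_formula: "md (md u (-2) vac) p w + sc (of_int p) (md u (p - 1) w) = 0"
proof -
  obtain K where K: "\<And>N. N \<ge> K \<Longrightarrow> borch_lhs md sc u vac w p 0 (-2) N = borch_rhs md sc u vac w p 0 (-2) N"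
    using borcherds by blast
  define N where "N = max K 2"
  have lhs: "borch_lhs md sc u vac w p 0 (-2) N = md (md u (-2) vac) p w + sc (of_int p) (md u (p - 1) w)"
    unfolding borch_lhs_def
    by (subst sum_upto2) (auto simp: N_def creation creation_id)
  have rhs: "borch_rhs md sc u vac w p 0 (-2) N = 0"
    unfolding borch_rhs_def by (rule sum.neutral) (auto simp: vacuum)
  show ?thesis using K[of N] lhs rhs N_def by simp
qed

lemma CC_neg_nat: "n \<ge> 2 \<Longrightarrow> md u (- int n) w \<in> CC"
proof (induction n arbitrary: u rule: nat_induct_at_least)
  case base then show ?case using CC_gen by simp
next
  case (Suc n)
  have "md (md u (-2) vac) (- int n) w + sc (of_int (- int n)) (md u (- int n - 1) w) = 0"
    by (rule D_formula)
  then have "md u (- int n - 1) w = sc (- 1 / of_int (- int n)) (md (md u (-2) vac) (- int n) w)"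
    by (rule sc_solve) (use Suc in simp)
  moreover have "md (md u (-2) vac) (- int n) w \<in> CC" by (rule Suc.IH)
  ultimately have m: "md u (- int n - 1) w \<in> CC" by (simp add: CC_sc)
  have e: "- int (Suc n) = - int n - 1" by simp
  show ?case by (subst e) (rule m)
qed

lemma CC_le: "n \<le> -2 \<Longrightarrow> md u n w \<in> CC"
  using CC_neg_nat[of "nat (- n)" u w] by simp

lemma skew: "md u r v + sc ((-1) powi r) (md v r u) \<in> CC"
proof -
  obtain K where K: "\<And>N. N \<ge> K \<Longrightarrow> borch_lhs md sc u v vac (-1) 0 r N = borch_rhs md sc u v vac (-1) 0 r N"
    using borcherds by blast
  define N where "N = max K 1"
  have l: "borch_lhs md sc u v vac (-1) 0 r N - md u r v \<in> CC"
  proof -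
    have "borch_lhs md sc u v vac (-1) 0 r N
       - (\<lambda>i. sc ((of_int (-1) :: complex) gchoose i) (md (md u (r + int i) v) (-1 + 0 - int i) vac)) 0 \<in> CC"
      unfolding borch_lhs_def by (rule sum_CC) (auto intro!: CC_sc CC_le)
    then show ?thesis by (simp add: creation_id)
  qed
  have r: "borch_rhs md sc u v vac (-1) 0 r N = - sc ((-1) powi r) (md v r u)"
    unfolding borch_rhs_def by (subst sum_upto1) (auto simp: creation creation_id)
  have "- sc ((-1) powi r) (md v r u) - md u r v \<in> CC" using l r K[of N] N_def by simp
  then have "- (- sc ((-1) powi r) (md v r u) - md u r v) \<in> CC" by (rule CC_neg)
  then show ?thesis by (simp add: algebra_simps)
qed

lemma commutator: "\<exists>K. \<forall>N\<ge>K. (\<Sum>i=0..N. sc ((of_int p :: complex) gchoose i) (md (md u (int i) v) (p + q - int i) w))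
   = md u p (md v q w) - md v q (md u p w)"
proof -
  obtain K where K: "\<And>N. N \<ge> K \<Longrightarrow> borch_lhs md sc u v w p q 0 N = borch_rhs md sc u v w p q 0 N"
    using borcherds by blast
  have "borch_rhs md sc u v w p q 0 N = md u p (md v q w) - md v q (md u p w)" for N
    unfolding borch_rhs_def by (subst sum_upto1) (auto simp: gbinomial_0_left)
  then show ?thesis using K unfolding borch_lhs_def by auto
qed

lemma md_CC_gen: "p \<le> 0 \<Longrightarrow> md w p (md u (-2) v) \<in> CC"
proof -
  assume p: "p \<le> 0"
  obtain K where K: "\<And>N. N \<ge> K \<Longrightarrow> (\<Sum>i=0..N. sc ((of_int p :: complex) gchoose i) (md (md w (int i) u) (p + -2 - int i) v))
   = md w p (md u (-2) v) - md u (-2) (md w p v)"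
    using commutator by blast
  have "(\<Sum>i=0..K. sc ((of_int p :: complex) gchoose i) (md (md w (int i) u) (p + -2 - int i) v)) \<in> CC"
  proof -
    have "sc ((of_int p :: complex) gchoose i) (md (md w (int i) u) (p + -2 - int i) v) \<in> CC" for i
      by (rule CC_sc, rule CC_le) (use p in simp)
    then show ?thesis unfolding C2_def by (intro span_sum) (simp add: C2_def)
  qed
  then have "md w p (md u (-2) v) - md u (-2) (md w p v) \<in> CC" using K by simp
  from CC_add[OF this CC_gen[of u "md w p v"]] show ?thesis by simp
qed

lemma md_CC: "p \<le> 0 \<Longrightarrow> c \<in> CC \<Longrightarrow> md w p c \<in> CC"
proof -
  assume p: "p \<le> 0" and c: "c \<in> CC"
  from c[unfolded C2_def] show ?thesis
  proof (induction rule: span_induct_alt)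
    case base then show ?case using CC_0 by simp
  next
    case (step a x y)
    then have "md w p x \<in> CC" using md_CC_gen[OF p] by blast
    then show ?case using step by (simp add: md_add_right md_scale_right CC_add CC_sc)
  qed
qed

lemma derivation: "md b 0 (md v (-1) x) = md (md b 0 v) (-1) x + md v (-1) (md b 0 x)"
proof -
  obtain K where K: "\<And>N. N \<ge> K \<Longrightarrow> (\<Sum>i=0..N. sc ((of_int 0 :: complex) gchoose i) (md (md b (int i) v) (0 + -1 - int i) x))
   = md b 0 (md v (-1) x) - md v (-1) (md b 0 x)"
    using commutator by blast
  have "(\<Sum>i=0..K. sc ((of_int 0 :: complex) gchoose i) (md (md b (int i) v) (0 + -1 - int i) x)) = md (md b 0 v) (-1) x"
    by (subst sum_upto1) (auto simp: gbinomial_0_left)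
  then show ?thesis using K[of K] by (simp add: algebra_simps)
qed

lemma assoc_CC: "md (md u (-1) v) (-1) w - md v (-1) (md u (-1) w) \<in> CC"
proof -
  obtain K where K: "\<And>N. N \<ge> K \<Longrightarrow> borch_lhs md sc u v w (-1) 0 (-1) N = borch_rhs md sc u v w (-1) 0 (-1) N"
    using borcherds by blast
  have l: "borch_lhs md sc u v w (-1) 0 (-1) K - md (md u (-1) v) (-1) w \<in> CC"
  proof -
    have "borch_lhs md sc u v w (-1) 0 (-1) K
       - (\<lambda>i. sc ((of_int (-1) :: complex) gchoose i) (md (md u (-1 + int i) v) (-1 + 0 - int i) w)) 0 \<in> CC"
      unfolding borch_lhs_def by (rule sum_CC) (auto intro!: CC_sc CC_le)
    then show ?thesis by simp
  qed
  have r: "borch_rhs md sc u v w (-1) 0 (-1) K - (md u (-2) (md v 0 w) + md v (-1) (md u (-1) w)) \<in> CC"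
  proof -
    have "borch_rhs md sc u v w (-1) 0 (-1) K
       - (\<lambda>i. sc ((-1) ^ i * ((of_int (-1) :: complex) gchoose i))
        (md u (-1 + -1 - int i) (md v (0 + int i) w)
         - sc ((-1) powi (-1)) (md v (0 + -1 - int i) (md u (-1 + int i) w)))) 0 \<in> CC"
      unfolding borch_rhs_def
    proof (rule sum_CC)
      fix i :: nat assume i: "1 \<le> i"
      have a: "md u (-1 + -1 - int i) (md v (0 + int i) w) \<in> CC" by (rule CC_le) simp
      have b: "md v (0 + -1 - int i) (md u (-1 + int i) w) \<in> CC" by (rule CC_le) (use i in simp)
      show "sc ((-1) ^ i * ((of_int (-1) :: complex) gchoose i))
        (md u (-1 + -1 - int i) (md v (0 + int i) w)
         - sc ((-1) powi (-1)) (md v (0 + -1 - int i) (md u (-1 + int i) w))) \<in> CC"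
        by (intro CC_sc CC_diff a b)
    qed
    then show ?thesis by (simp add: algebra_simps)
  qed
  have "md u (-2) (md v 0 w) \<in> CC" by (rule CC_gen)
  note X = this
  define A where "A = borch_lhs md sc u v w (-1) 0 (-1) K"
  have AB: "A = borch_rhs md sc u v w (-1) 0 (-1) K" using K[of K] A_def by simp
  have e: "md (md u (-1) v) (-1) w - md v (-1) (md u (-1) w)
     = (A - (md u (-2) (md v 0 w) + md v (-1) (md u (-1) w))) - (A - md (md u (-1) v) (-1) w) + md u (-2) (md v 0 w)"
    by (simp add: algebra_simps)
  have r': "A - (md u (-2) (md v 0 w) + md v (-1) (md u (-1) w)) \<in> CC" using r AB by simp
  have l': "A - md (md u (-1) v) (-1) w \<in> CC" using l A_def by simp
  show ?thesis unfolding e by (intro CC_add CC_diff r' l' X)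
qed

end


sublocale vertex_algebra \<subseteq> Q: qalg sc "C2 sc md" "\<lambda>x y. md x (-1) y" vac
proof unfold_locales
  show "subspace (C2 sc md)" by (rule CC_sub)
  show "md (x + y) (-1) z = md x (-1) z + md y (-1) z" for x y z by (rule md_add_left)
  show "md x (-1) (y + z) = md x (-1) y + md x (-1) z" for x y z by (rule md_add_right)
  show "md (sc a x) (-1) y = sc a (md x (-1) y)" for a x y by (rule md_scale_left)
  show "md x (-1) (sc a y) = sc a (md x (-1) y)" for a x y by (rule md_scale_right)
  show "w \<in> C2 sc md \<Longrightarrow> md x (-1) w \<in> C2 sc md" for w x by (rule md_CC) simp
  show "md x (-1) y - md y (-1) x \<in> C2 sc md" for x y
    using skew[of x "-1" y] by simp
  show "md (md x (-1) y) (-1) z - md y (-1) (md x (-1) z) \<in> C2 sc md" for x y z by (rule assoc_CC)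
  show "md vac (-1) x = x" for x by (simp add: vacuum)
  show "md x (-1) vac = x" for x by (rule creation_id)
qed

context vertex_algebra begin

lemma set_rep: "set (replicate j (-1::int)) \<subseteq> {0, -1}"
  by (auto simp: set_replicate_conv_if)

lemma iter_rep: "iter md v (replicate k (-1)) = Q.pw v (Suc k)"
proof (induction k)
  case 0 then show ?case by (simp add: iter_def Q.pw_Suc creation_id)
next
  case (Suc k)
  then show ?case by (simp add: iter_def Q.pw_Suc)
qed

lemma v0v: "md v 0 v \<in> CC"
proof -
  have "md v 0 v + sc ((-1) powi 0) (md v 0 v) \<in> CC" by (rule skew)
  moreover have "sc 2 (md v 0 v) = md v 0 v + md v 0 v"
    by (metis one_add_one scale_left_distrib scale_one)
  ultimately have "sc 2 (md v 0 v) \<in> CC" by simp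
  then have "sc (1/2) (sc 2 (md v 0 v)) \<in> CC" by (rule CC_sc)
  then show ?thesis by simp
qed

lemma v0pow: "md v 0 (Q.pw v (Suc k)) \<in> CC"
proof (induction k)
  case 0
  then show ?case using v0v by (simp add: Q.pw_Suc creation_id)
next
  case (Suc k)
  have "md v 0 (Q.pw v (Suc (Suc k))) = md (md v 0 v) (-1) (Q.pw v (Suc k)) + md v (-1) (md v 0 (Q.pw v (Suc k)))"
    by (simp add: Q.pw_Suc[of v "Suc k"] derivation)
  moreover have "md (md v 0 v) (-1) (Q.pw v (Suc k)) \<in> CC"
  proof (rule Q.mul_C1)
    show "md v 0 v \<in> CC" by (rule v0v)
  qed
  moreover have "md v (-1) (md v 0 (Q.pw v (Suc k))) \<in> CC" by (rule md_CC) (use Suc.IH in simp_all)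
  ultimately show ?case by (simp add: CC_add)
qed

lemma iter_cases: "set ns \<subseteq> {0, -1} \<Longrightarrow> iter md v ns \<in> CC \<or> iter md v ns = Q.pw v (Suc (length ns))"
proof (induction ns)
  case Nil then show ?case by (simp add: iter_def Q.pw_Suc creation_id)
next
  case (Cons n ns)
  have n: "n = 0 \<or> n = -1" using Cons.prems by auto
  have ins: "iter md v (n # ns) = md v n (iter md v ns)" by (simp add: iter_def)
  from Cons have "iter md v ns \<in> CC \<or> iter md v ns = Q.pw v (Suc (length ns))" by simp
  then show ?case
  proof
    assume "iter md v ns \<in> CC"
    then have "md v n (iter md v ns) \<in> CC" by (rule md_CC[rotated]) (use n in auto)
    then show ?thesis using ins by simp
  next
    assume e: "iter md v ns = Q.pw v (Suc (length ns))"
    show ?thesis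
    proof (cases "n = 0")
      case True
      then show ?thesis using ins e v0pow by simp
    next
      case False
      then have "n = -1" using n by simp
      then show ?thesis using ins e by (simp add: Q.pw_Suc[of v "Suc (length ns)"])
    qed
  qed
qed

lemma deriv_pow: "Q.pr (md b 0 (Q.pw v (Suc k))) = sc (of_nat (Suc k)) (Q.pr (md (md b 0 v) (-1) (Q.pw v k)))"
proof (induction k)
  case 0 then show ?case by (simp add: Q.pw_Suc creation_id)
next
  case (Suc k)
  let ?d = "md b 0 v"
  have "Q.pr (md b 0 (Q.pw v (Suc (Suc k)))) = Q.pr (md ?d (-1) (Q.pw v (Suc k))) + Q.m v (md b 0 (Q.pw v (Suc k)))"
    by (simp add: Q.pw_Suc[of v "Suc k"] derivation Q.m_def)
  also have "Q.m v (md b 0 (Q.pw v (Suc k))) = Q.m v (Q.pr (md b 0 (Q.pw v (Suc k))))" by simp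
  also have "\<dots> = sc (of_nat (Suc k)) (Q.m v (Q.m ?d (Q.pw v k)))" using Suc by (simp add: Q.m_def[symmetric])
  also have "Q.m v (Q.m ?d (Q.pw v k)) = Q.m ?d (Q.m v (Q.pw v k))" by (simp add: Q.m_ac)
  also have "\<dots> = Q.pr (md ?d (-1) (Q.pw v (Suc k)))" by (metis Q.m_def Q.m_pr2 Q.pr_pw_Suc)
  finally have f: "Q.pr (md b 0 (Q.pw v (Suc (Suc k)))) = Q.pr (md ?d (-1) (Q.pw v (Suc k))) + sc (of_nat (Suc k)) (Q.pr (md ?d (-1) (Q.pw v (Suc k))))" .
  have e: "sc (of_nat (Suc (Suc k))) (Q.pr (md ?d (-1) (Q.pw v (Suc k)))) = Q.pr (md ?d (-1) (Q.pw v (Suc k))) + sc (of_nat (Suc k)) (Q.pr (md ?d (-1) (Q.pw v (Suc k))))"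
    unfolding of_nat_Suc[of "Suc k"] scale_left_distrib by simp
  show ?case unfolding e by (rule f)
qed

lemma skew0: "Q.pr (md x 0 w) = - Q.pr (md w 0 x)"
proof -
  have "md x 0 w + md w 0 x \<in> CC" using skew[of x 0 w] by simp
  then have "Q.pr (md x 0 w + md w 0 x) = 0" using Q.pr_C by blast
  then show ?thesis by (simp add: eq_neg_iff_add_eq_0)
qed

context
  fixes M assumes Msub: "subspace M" and CM: "CC \<subseteq> M"
begin

lemma prM: "Q.pr x \<in> M \<longleftrightarrow> x \<in> M" using Q.pr_mem[OF Msub CM] .

lemma r01_eq: "r01 md M = Q.Rs M"
proof
  show "r01 md M \<subseteq> Q.Rs M"
  proof
    fix v assume "v \<in> r01 md M"
    then obtain k where k: "\<And>ns. length ns \<ge> k \<Longrightarrow> set ns \<subseteq> {0, -1} \<Longrightarrow> iter md v ns \<in> M"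
      unfolding r01_def by blast
    have "Q.pw v t \<in> M" if t: "t \<ge> Suc k" for t
    proof -
      obtain j where j: "t = Suc j" "j \<ge> k" using t by (cases t) auto
      show ?thesis using k[of "replicate j (-1)", OF _ set_rep] j iter_rep by simp
    qed
    then show "v \<in> Q.Rs M" unfolding Q.Rs_def by blast
  qed
next
  show "Q.Rs M \<subseteq> r01 md M"
  proof
    fix v assume "v \<in> Q.Rs M"
    then obtain k where k: "\<And>t. t \<ge> k \<Longrightarrow> Q.pw v t \<in> M" unfolding Q.Rs_def by blast
    have "iter md v ns \<in> M" if l: "length ns \<ge> k" and ns: "set ns \<subseteq> {0, -1}" for ns
    proof -
      from iter_cases[OF ns, of v] show ?thesis
      proof
        assume "iter md v ns \<in> CC" then show ?thesis using CM by blast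
      next
        assume "iter md v ns = Q.pw v (Suc (length ns))" then show ?thesis using k[of "Suc (length ns)"] l by simp
      qed
    qed
    then show "v \<in> r01 md M" unfolding r01_def by blast
  qed
qed

lemma rquot_eq: "rquot md M = Q.Rs M"
proof -
  have q: "qpow md a (Suc j) = Q.pw a (Suc j)" for a j
    by (simp add: qpow_def Q.pw_def funpow_Suc_right creation_id del: funpow.simps)
  have q': "t \<ge> 1 \<Longrightarrow> qpow md a t = Q.pw a t" for a t using q[of a "t - 1"] by simp
  show ?thesis
  proof
    show "rquot md M \<subseteq> Q.Rs M" unfolding rquot_def Q.Rs_def using q' by force
    show "Q.Rs M \<subseteq> rquot md M"
    proof
      fix a assume "a \<in> Q.Rs M"
      then obtain k where k: "\<And>t. t \<ge> k \<Longrightarrow> Q.pw a t \<in> M" unfolding Q.Rs_def by blast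
      have "\<forall>t\<ge>max k 1. qpow md a t \<in> M" using k q' by simp
      then show "a \<in> rquot md M" unfolding rquot_def by (intro CollectI exI[of _ "max k 1"]) simp
    qed
  qed
qed

lemma lsr_Ls: "lsr01 md M \<subseteq> Q.Ls M"
proof
  fix v assume v: "v \<in> lsr01 md M"
  show "v \<in> Q.Ls M" unfolding Q.Ls_def
  proof (intro CollectI allI)
    fix b
    have "\<exists>m::nat. \<forall>s ns. s \<in> {0, -1} \<and> length ns \<ge> m \<and> set ns \<subseteq> {0, -1} \<longrightarrow> md b s (iter md v ns) \<in> M"
      using v unfolding lsr01_def by simp
    then obtain k where k0: "\<forall>s ns. s \<in> {0, -1} \<and> length ns \<ge> k \<and> set ns \<subseteq> {0, -1} \<longrightarrow> md b s (iter md v ns) \<in> M"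
      by blast
    have k: "md b s (iter md v ns) \<in> M" if "s \<in> {0, -1}" "length ns \<ge> k" "set ns \<subseteq> {0, -1}" for s ns
      using k0 that by blast
    have "md b (-1) (Q.pw v t) \<in> M" if t: "t \<ge> Suc k" for t
    proof -
      obtain j where j: "t = Suc j" "j \<ge> k" using t by (cases t) auto
      show ?thesis using k[of "-1" "replicate j (-1)", OF _ _ set_rep] j iter_rep by simp
    qed
    then show "\<exists>k. \<forall>t\<ge>k. md b (-1) (Q.pw v t) \<in> M" by blast
  qed
qed

lemma Ls_lsr: "Q.Ls M \<subseteq> lsr01 md M"
proof
  fix v assume v: "v \<in> Q.Ls M"
  show "v \<in> lsr01 md M" unfolding lsr01_def
  proof (intro CollectI allI)
    fix b
    obtain k1 where k1: "\<And>t. t \<ge> k1 \<Longrightarrow> md b (-1) (Q.pw v t) \<in> M" using v unfolding Q.Ls_def by blast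
    obtain k2 where k2: "\<And>t. t \<ge> k2 \<Longrightarrow> md (md b 0 v) (-1) (Q.pw v t) \<in> M" using v unfolding Q.Ls_def by blast
    have "md b s (iter md v ns) \<in> M" if s: "s \<in> {0, -1}" and l: "length ns \<ge> max k1 k2" and ns: "set ns \<subseteq> {0, -1}" for s ns
    proof (cases "iter md v ns \<in> CC")
      case True
      then have "md b s (iter md v ns) \<in> CC" by (rule md_CC[rotated]) (use s in auto)
      then show ?thesis using CM by blast
    next
      case False
      then have e: "iter md v ns = Q.pw v (Suc (length ns))" using iter_cases[OF ns] by blast
      show ?thesis
      proof (cases "s = 0")
        case True
        have "Q.pr (md (md b 0 v) (-1) (Q.pw v (length ns))) \<in> M" using k2 l prM by simp
        then have "sc (of_nat (Suc (length ns))) (Q.pr (md (md b 0 v) (-1) (Q.pw v (length ns)))) \<in> M"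
          using Msub subspace_scale by blast
        then have "Q.pr (md b 0 (iter md v ns)) \<in> M" using e deriv_pow by simp
        then show ?thesis using True prM by simp
      next
        case False
        then have "s = -1" using s by simp
        then show ?thesis using e k1[of "Suc (length ns)"] l by simp
      qed
    qed
    then show "\<exists>m. \<forall>s ns. s \<in> {0, -1} \<and> m \<le> length ns \<and> set ns \<subseteq> {0, -1} \<longrightarrow> md b s (iter md v ns) \<in> M"
      by blast
  qed
qed

lemma Ls_rsr: "Q.Ls M \<subseteq> rsr01 md M"
proof
  fix v assume v: "v \<in> Q.Ls M"
  show "v \<in> rsr01 md M" unfolding rsr01_def
  proof (intro CollectI allI)
    fix w
    obtain k1 where k1: "\<And>t. t \<ge> k1 \<Longrightarrow> md w (-1) (Q.pw v t) \<in> M" using v unfolding Q.Ls_def by blast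
    obtain k2 where k2: "\<And>t. t \<ge> k2 \<Longrightarrow> md (md w 0 v) (-1) (Q.pw v t) \<in> M" using v unfolding Q.Ls_def by blast
    have "md (iter md v ns) n w \<in> M" if s: "n \<in> {0, -1}" and l: "length ns \<ge> max k1 k2" and ns: "set ns \<subseteq> {0, -1}" for n ns
    proof (cases "iter md v ns \<in> CC")
      case True
      show ?thesis
      proof (cases "n = 0")
        case True
        have "md w 0 (iter md v ns) \<in> CC" by (rule md_CC[rotated]) (use \<open>iter md v ns \<in> CC\<close> in auto)
        then have "Q.pr (md w 0 (iter md v ns)) = 0" using Q.pr_C by blast
        then have "Q.pr (md (iter md v ns) 0 w) = 0" using skew0[of "iter md v ns" w] by simp
        then have "md (iter md v ns) 0 w \<in> CC" using Q.pr_C by blast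
        then show ?thesis using True CM by blast
      next
        case False
        then have "n = -1" using s by simp
        then have "md (iter md v ns) n w \<in> CC" using Q.mul_C1 \<open>iter md v ns \<in> CC\<close> by simp
        then show ?thesis using CM by blast
      qed
    next
      case False
      then have e: "iter md v ns = Q.pw v (Suc (length ns))" using iter_cases[OF ns] by blast
      show ?thesis
      proof (cases "n = 0")
        case True
        have "Q.pr (md (md w 0 v) (-1) (Q.pw v (length ns))) \<in> M" using k2 l prM by simp
        then have "- sc (of_nat (Suc (length ns))) (Q.pr (md (md w 0 v) (-1) (Q.pw v (length ns)))) \<in> M"
          using Msub subspace_scale subspace_neg by blast
        then have "Q.pr (md (iter md v ns) 0 w) \<in> M" using e deriv_pow skew0[of "iter md v ns" w] by simp
        then show ?thesis using True prM by simp
      next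
        case False
        then have n1: "n = -1" using s by simp
        have a: "Q.pr (md w (-1) (Q.pw v (Suc (length ns)))) \<in> M" using k1[of "Suc (length ns)"] l prM by simp
        have b: "Q.pr (md (Q.pw v (Suc (length ns))) (-1) w) = Q.pr (md w (-1) (Q.pw v (Suc (length ns))))"
          using Q.m_comm[of "Q.pw v (Suc (length ns))" w] unfolding Q.m_def .
        have "Q.pr (md (iter md v ns) n w) \<in> M" using a b e n1 by simp
        then show ?thesis using prM by blast
      qed
    qed
    then show "\<exists>m. \<forall>n ns. n \<in> {0, -1} \<and> m \<le> length ns \<and> set ns \<subseteq> {0, -1} \<longrightarrow> md (iter md v ns) n w \<in> M"
      by blast
  qed
qed

lemma sr01_eq: "sr01 md M = Q.Ls M"
  unfolding sr01_def using lsr_Ls Ls_lsr Ls_rsr by blast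

end

lemma main_va:
  assumes Msub: "subspace M" and CM: "CC \<subseteq> M" and F: "finite F" and MF: "M \<subseteq> span (CC \<union> F)"
  shows "MZ01_subspace md M \<longleftrightarrow> quot_ideal sc md (rquot md M)"
proof -
  have CR: "CC \<subseteq> Q.Rs M"
  proof
    fix c assume c: "c \<in> CC"
    have "Q.pw c t \<in> M" if "t \<ge> 1" for t using Q.pw_C[OF c that] CM by blast
    then show "c \<in> Q.Rs M" unfolding Q.Rs_def by blast
  qed
  have "MZ01_subspace md M \<longleftrightarrow> Q.Rs M = Q.Ls M"
    unfolding MZ01_subspace_def r01_eq[OF Msub CM] sr01_eq[OF Msub CM] ..
  also have "\<dots> \<longleftrightarrow> subspace (Q.Rs M) \<and> (\<forall>a b. a \<in> Q.Rs M \<longrightarrow> md b (-1) a \<in> Q.Rs M)"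
  proof
    assume "Q.Rs M = Q.Ls M"
    then show "subspace (Q.Rs M) \<and> (\<forall>a b. a \<in> Q.Rs M \<longrightarrow> md b (-1) a \<in> Q.Rs M)"
      using Q.ideal_of_eq[OF Msub CM F MF] by blast
  next
    assume h: "subspace (Q.Rs M) \<and> (\<forall>a b. a \<in> Q.Rs M \<longrightarrow> md b (-1) a \<in> Q.Rs M)"
    have "Q.Rs M \<subseteq> Q.Ls M" using Q.L_of_ideal[OF Msub CM] h by blast
    then show "Q.Rs M = Q.Ls M" using Q.Ls_Rs by blast
  qed
  also have "\<dots> \<longleftrightarrow> quot_ideal sc md (rquot md M)"
    unfolding quot_ideal_def rquot_eq[OF Msub CM] using CR by blast
  finally show ?thesis .
qed

end

theorem mainTheorem11:
  fixes sc :: "complex \<Rightarrow> 'v::ab_group_add \<Rightarrow> 'v"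
    and md :: "'v \<Rightarrow> int \<Rightarrow> 'v \<Rightarrow> 'v"
    and vac :: 'v
    and M :: "'v set"
  assumes "vertex_algebra sc md vac"
    and "module.subspace sc M"
    and "C2 sc md \<subseteq> M"
    and "\<exists>F. finite F \<and> M \<subseteq> module.span sc (C2 sc md \<union> F)"
  shows "MZ01_subspace md M \<longleftrightarrow> quot_ideal sc md (rquot md M)"
proof -
  obtain F where F: "finite F" "M \<subseteq> module.span sc (C2 sc md \<union> F)" using assms(4) by blast
  show ?thesis using vertex_algebra.main_va[OF assms(1) assms(2) assms(3) F(1) F(2)] .
qed


end
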